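(* Let $n\ge2$ and $k\ge1$ be integers, and let $(S^n,g_0)$ be the round unit sphere $S^n\subset\mathbb{R}^{n+1}$. Let $x^0,\dots,x^n$ be the restrictions to $S^n$ of the standard coordinates of $\mathbb{R}^{n+1}$. Then for all $u\in C^\infty(S^n)$, \[ \sum_{i=0}^n x^i\bigl(L_{2k}(x^iu) - x^iL_{2k}(u)\bigr) = k(n+2k-2)\,L_{2k-2}u . \]
   Context: $\Delta$ is the (nonpositive) Laplace–Beltrami operator of $g_0$. For an integer $m\ge1$, $L_{2m}:=\prod_{j=1}^m\bigl(-\Delta+\tfrac{(n-2j)(n+2j-2)}{4}\bigr)$ (the GJMS operator on the round sphere), and $L_0$ is the identity operator. *)

theory Defs
  imports "HOL-Analysis.Analysis"
begin

text \<open>Functions on the round sphere S^n \<subseteq> R^(n+1) are represented as functions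
  u :: real^'n \<Rightarrow> real, with CARD('n) = n+1; only their values on sphere 0 1 matter.\<close>

definition partial_deriv :: "'n::finite \<Rightarrow> (real^'n \<Rightarrow> real) \<Rightarrow> real^'n \<Rightarrow> real" where
  "partial_deriv i f x = deriv (\<lambda>t. f (x + t *\<^sub>R axis i 1)) 0"

fun iter_partial :: "'n::finite list \<Rightarrow> (real^'n \<Rightarrow> real) \<Rightarrow> real^'n \<Rightarrow> real" where
  "iter_partial [] f = f"
| "iter_partial (i # is) f = partial_deriv i (iter_partial is f)"

definition smooth_on :: "(real^'n::finite) set \<Rightarrow> (real^'n \<Rightarrow> real) \<Rightarrow> bool" where
  "smooth_on S f \<longleftrightarrow>
     (\<forall>is. continuous_on S (iter_partial is f) \<and>
       (\<forall>i. \<forall>x\<in>S. (\<lambda>t. iter_partial is f (x + t *\<^sub>R axis i 1)) differentiable (at 0)))"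

definition hom_ext :: "(real^'n::finite \<Rightarrow> real) \<Rightarrow> real^'n \<Rightarrow> real" where
  "hom_ext u y = u (y /\<^sub>R norm y)"

text \<open>u \<in> C^\<infinity>(S^n): its zero-homogeneous extension is smooth on R^(n+1) - {0}.\<close>
definition smooth_on_sphere :: "(real^'n::finite \<Rightarrow> real) \<Rightarrow> bool" where
  "smooth_on_sphere u \<longleftrightarrow> smooth_on (- {0}) (hom_ext u)"

definition euclid_laplacian :: "(real^'n::finite \<Rightarrow> real) \<Rightarrow> real^'n \<Rightarrow> real" where
  "euclid_laplacian f x = (\<Sum>i\<in>UNIV. partial_deriv i (partial_deriv i f) x)"

text \<open>(Nonpositive) Laplace-Beltrami operator of the round metric, evaluated at points of
  the unit sphere: Laplacian of the zero-homogeneous extension.\<close>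
definition sphere_laplacian :: "(real^'n::finite \<Rightarrow> real) \<Rightarrow> real^'n \<Rightarrow> real" where
  "sphere_laplacian u x = euclid_laplacian (hom_ext u) x"

definition sph_dim :: "'n::finite itself \<Rightarrow> real" where
  "sph_dim _ = real CARD('n) - 1"

text \<open>GJMS operator L_{2m} = prod_{j=1}^m (-\<Delta> + (n-2j)(n+2j-2)/4), L_0 = id.\<close>
fun gjms :: "nat \<Rightarrow> (real^'n::finite \<Rightarrow> real) \<Rightarrow> real^'n \<Rightarrow> real" where
  "gjms 0 u = u"
| "gjms (Suc m) u =
     (\<lambda>x. - sphere_laplacian (gjms m u) x
          + ((sph_dim TYPE('n) - 2 * real (Suc m)) * (sph_dim TYPE('n) + 2 * real (Suc m) - 2) / 4)
            * gjms m u x)"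

end

theory Submission
  imports Defs
begin

definition pdiff :: "(real^'n::finite) set \<Rightarrow> (real^'n \<Rightarrow> real) \<Rightarrow> bool" where
  "pdiff S f \<longleftrightarrow> continuous_on S f \<and> (\<forall>i. \<forall>x\<in>S. (\<lambda>t. f (x + t *\<^sub>R axis i 1)) differentiable (at 0))"

lemma smooth_on_pdiff: "smooth_on S f \<longleftrightarrow> (\<forall>is. pdiff S (iter_partial is f))"
  by (auto simp: smooth_on_def pdiff_def)

lemma iter_partial_append: "iter_partial (is @ js) f = iter_partial is (iter_partial js f)"
  by (induction "is") auto

lemma pd_has_deriv0:
  assumes "(\<lambda>t. f (x + t *\<^sub>R axis i 1)) differentiable (at 0)"
  shows "((\<lambda>t. f (x + t *\<^sub>R axis i 1)) has_real_derivative partial_deriv i f x) (at 0)"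
  using assms unfolding partial_deriv_def by (simp add: DERIV_deriv_iff_real_differentiable)

lemma pd_has_deriv_shift:
  assumes "(\<lambda>t. f ((x + s *\<^sub>R axis i 1) + t *\<^sub>R axis i 1)) differentiable (at 0)"
  shows "((\<lambda>t. f (x + t *\<^sub>R axis i 1)) has_real_derivative partial_deriv i f (x + s *\<^sub>R axis i 1)) (at s)"
proof -
  have "((\<lambda>t. f ((x + s *\<^sub>R axis i 1) + t *\<^sub>R axis i 1)) has_real_derivative partial_deriv i f (x + s *\<^sub>R axis i 1)) (at 0)"
    by (rule pd_has_deriv0[OF assms])
  then have "((\<lambda>t. f (x + (t + s) *\<^sub>R axis i 1)) has_real_derivative partial_deriv i f (x + s *\<^sub>R axis i 1)) (at 0)"
    by (simp add: algebra_simps scaleR_add_left)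
  then show ?thesis using DERIV_shift[where f="\<lambda>t. f (x + t *\<^sub>R axis i 1)" and x=0 and z=s] by simp
qed

lemma eventually_line_in_open:
  fixes x v :: "real^'n::finite"
  assumes "open S" "x \<in> S"
  shows "\<forall>\<^sub>F t in nhds (0::real). x + t *\<^sub>R v \<in> S"
proof -
  have "isCont (\<lambda>t::real. x + t *\<^sub>R v) 0" by (intro continuous_intros)
  then have "((\<lambda>t::real. x + t *\<^sub>R v) \<longlongrightarrow> x) (at 0)" by (simp add: isCont_def)
  then have "\<forall>\<^sub>F t in at 0. x + t *\<^sub>R v \<in> S" using assms by (auto intro: topological_tendstoD)
  then show ?thesis using assms by (simp add: eventually_nhds_conv_at)
qed

lemma partial_deriv_cong:
  assumes "open S" "x \<in> S" "\<And>y. y \<in> S \<Longrightarrow> f y = g y"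
  shows "partial_deriv i f x = partial_deriv i g x"
  unfolding partial_deriv_def
  by (rule deriv_cong_ev) (use eventually_line_in_open[OF assms(1,2), of "axis i 1"] assms(3) in \<open>auto elim!: eventually_mono\<close>)

lemma iter_partial_cong:
  assumes "open S" "\<And>y. y \<in> S \<Longrightarrow> f y = g y" "x \<in> S"
  shows "iter_partial is f x = iter_partial is g x"
  using assms(3)
proof (induction "is" arbitrary: x)
  case Nil then show ?case using assms by simp
next
  case (Cons i "is")
  have "partial_deriv i (iter_partial is f) x = partial_deriv i (iter_partial is g) x"
    by (rule partial_deriv_cong[OF assms(1) Cons.prems]) (rule Cons.IH)
  then show ?case by simp
qed

lemma line_differentiable_cong:
  fixes f g :: "real^'n::finite \<Rightarrow> real"
  assumes "open S" "x \<in> S" "\<And>y. y \<in> S \<Longrightarrow> f y = g y"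
  shows "(\<lambda>t. f (x + t *\<^sub>R v)) differentiable (at 0) \<longleftrightarrow> (\<lambda>t. g (x + t *\<^sub>R v)) differentiable (at 0)"
proof -
  have ev: "\<forall>\<^sub>F t in nhds 0. f (x + t *\<^sub>R v) = g (x + t *\<^sub>R v)"
    using eventually_line_in_open[OF assms(1,2), of v] assms(3) by (auto elim!: eventually_mono)
  show ?thesis unfolding real_differentiable_def
    using DERIV_cong_ev[where x=0 and y=0 and f="\<lambda>t. f (x + t *\<^sub>R v)" and g="\<lambda>t. g (x + t *\<^sub>R v)", OF refl ev refl] by simp
qed

lemma pdiff_cong:
  assumes "open S" "\<And>y. y \<in> S \<Longrightarrow> f y = g y"
  shows "pdiff S f \<longleftrightarrow> pdiff S g"
proof -
  have "(\<forall>i. \<forall>x\<in>S. (\<lambda>t. f (x + t *\<^sub>R axis i 1)) differentiable (at 0)) \<longleftrightarrow>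
        (\<forall>i. \<forall>x\<in>S. (\<lambda>t. g (x + t *\<^sub>R axis i 1)) differentiable (at 0))"
  proof -
    have "\<And>i x. x \<in> S \<Longrightarrow> (\<lambda>t. f (x + t *\<^sub>R axis i 1)) differentiable (at 0) \<longleftrightarrow> (\<lambda>t. g (x + t *\<^sub>R axis i 1)) differentiable (at 0)"
      by (rule line_differentiable_cong) (use assms in auto)
    then show ?thesis by blast
  qed
  moreover have "continuous_on S f \<longleftrightarrow> continuous_on S g"
    by (rule continuous_on_cong[OF refl]) (rule assms(2))
  ultimately show ?thesis unfolding pdiff_def by blast
qed

lemma smooth_on_cong:
  assumes "open S" "\<And>y. y \<in> S \<Longrightarrow> f y = g y"
  shows "smooth_on S f \<longleftrightarrow> smooth_on S g"
proof -
  have "\<And>is. pdiff S (iter_partial is f) \<longleftrightarrow> pdiff S (iter_partial is g)"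
    by (rule pdiff_cong[OF assms(1)], rule iter_partial_cong[OF assms], assumption)
  then show ?thesis unfolding smooth_on_pdiff by blast
qed

definition smooth_upto :: "nat \<Rightarrow> (real^'n::finite) set \<Rightarrow> (real^'n \<Rightarrow> real) \<Rightarrow> bool" where
  "smooth_upto n S f \<longleftrightarrow> (\<forall>is. length is \<le> n \<longrightarrow> pdiff S (iter_partial is f))"

lemma smooth_upto_0: "smooth_upto 0 S f \<longleftrightarrow> pdiff S f"
  by (auto simp: smooth_upto_def)

lemma smooth_upto_Suc:
  "smooth_upto (Suc n) S f \<longleftrightarrow> pdiff S f \<and> (\<forall>i. smooth_upto n S (partial_deriv i f))"
proof
  assume A: "smooth_upto (Suc n) S f"
  show "pdiff S f \<and> (\<forall>i. smooth_upto n S (partial_deriv i f))"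
  proof safe
    show "pdiff S f" using A[unfolded smooth_upto_def, rule_format, of "[]"] by simp
    fix i
    show "smooth_upto n S (partial_deriv i f)"
      unfolding smooth_upto_def
    proof safe
      fix "is" :: "'a list" assume "length is \<le> n"
      then show "pdiff S (iter_partial is (partial_deriv i f))"
        using A[unfolded smooth_upto_def, rule_format, of "is @ [i]"]
        by (simp add: iter_partial_append)
    qed
  qed
next
  assume B: "pdiff S f \<and> (\<forall>i. smooth_upto n S (partial_deriv i f))"
  show "smooth_upto (Suc n) S f"
    unfolding smooth_upto_def
  proof safe
    fix "is" :: "'a list" assume len: "length is \<le> Suc n"
    show "pdiff S (iter_partial is f)"
    proof (cases "is" rule: rev_cases)
      case Nil then show ?thesis using B by simp
    next
      case (snoc ys i)
      then show ?thesis using B len unfolding smooth_upto_def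
        by (simp add: iter_partial_append)
    qed
  qed
qed

lemma smooth_on_upto: "smooth_on S f \<longleftrightarrow> (\<forall>n. smooth_upto n S f)"
  unfolding smooth_on_pdiff smooth_upto_def by auto

lemma smooth_upto_cong:
  assumes "open S" "\<And>y. y \<in> S \<Longrightarrow> f y = g y"
  shows "smooth_upto n S f \<longleftrightarrow> smooth_upto n S g"
proof -
  have "\<And>is. pdiff S (iter_partial is f) \<longleftrightarrow> pdiff S (iter_partial is g)"
    by (rule pdiff_cong[OF assms(1)], rule iter_partial_cong[OF assms], assumption)
  then show ?thesis unfolding smooth_upto_def by blast
qed

lemma smooth_upto_mono: "smooth_upto (Suc n) S f \<Longrightarrow> smooth_upto n S f"
  by (auto simp: smooth_upto_def)

lemma smooth_on_imp_pdiff: "smooth_on S f \<Longrightarrow> pdiff S f"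
  unfolding smooth_on_pdiff by (metis iter_partial.simps(1))

lemma smooth_on_partial: "smooth_on S f \<Longrightarrow> smooth_on S (partial_deriv i f)"
  unfolding smooth_on_upto using smooth_upto_Suc by blast

lemma smooth_on_iff: "smooth_on S f \<longleftrightarrow> pdiff S f \<and> (\<forall>i. smooth_on S (partial_deriv i f))"
  unfolding smooth_on_upto using smooth_upto_Suc smooth_upto_0
  by (metis not0_implies_Suc)

subsection \<open>Algebra of partial derivatives\<close>

lemma pdiff_line: "pdiff S f \<Longrightarrow> x \<in> S \<Longrightarrow> (\<lambda>t. f (x + t *\<^sub>R axis i 1)) differentiable (at 0)"
  by (auto simp: pdiff_def)

lemma pdiff_add: "pdiff S f \<Longrightarrow> pdiff S g \<Longrightarrow> pdiff S (\<lambda>x. f x + g x)"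
  unfolding pdiff_def by (auto intro!: continuous_on_add differentiable_add)

lemma pdiff_mult: "pdiff S f \<Longrightarrow> pdiff S g \<Longrightarrow> pdiff S (\<lambda>x. f x * g x)"
  unfolding pdiff_def by (auto intro!: continuous_on_mult differentiable_mult)

lemma pdiff_const: "pdiff S (\<lambda>x. c)"
  unfolding pdiff_def by auto

lemma pd_add:
  assumes "pdiff S f" "pdiff S g" "x \<in> S"
  shows "partial_deriv i (\<lambda>x. f x + g x) x = partial_deriv i f x + partial_deriv i g x"
  unfolding partial_deriv_def[of i "\<lambda>x. f x + g x"]
  by (rule DERIV_imp_deriv, rule DERIV_add[OF pd_has_deriv0 pd_has_deriv0])
    (use assms in \<open>auto simp: pdiff_def\<close>)

lemma pd_mult:
  assumes "pdiff S f" "pdiff S g" "x \<in> S"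
  shows "partial_deriv i (\<lambda>x. f x * g x) x = partial_deriv i f x * g x + f x * partial_deriv i g x"
proof -
  have "((\<lambda>t. f (x + t *\<^sub>R axis i 1) * g (x + t *\<^sub>R axis i 1)) has_real_derivative
     partial_deriv i f x * g (x + 0 *\<^sub>R axis i 1) + partial_deriv i g x * f (x + 0 *\<^sub>R axis i 1)) (at 0)"
    by (rule DERIV_mult[OF pd_has_deriv0 pd_has_deriv0]) (use assms in \<open>auto simp: pdiff_def\<close>)
  then show ?thesis unfolding partial_deriv_def[of i "\<lambda>x. f x * g x"]
    by (auto dest!: DERIV_imp_deriv simp: partial_deriv_def)
qed

lemma pd_const: "partial_deriv i (\<lambda>x. c) x = 0"
  unfolding partial_deriv_def by simp

lemma pd_const_fun: "partial_deriv i (\<lambda>x. c) = (\<lambda>x. 0)"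
  by (rule ext) (simp add: pd_const)

lemma smooth_upto_const: "smooth_upto n S (\<lambda>x. c)"
proof (induction n arbitrary: c)
  case 0 then show ?case by (simp add: smooth_upto_0 pdiff_const)
next
  case (Suc n) then show ?case by (simp add: smooth_upto_Suc pdiff_const pd_const_fun)
qed

lemma smooth_on_const: "smooth_on S (\<lambda>x. c)"
  by (simp add: smooth_on_upto smooth_upto_const)

lemma smooth_upto_add:
  assumes "open S" shows "smooth_upto n S f \<Longrightarrow> smooth_upto n S g \<Longrightarrow> smooth_upto n S (\<lambda>x. f x + g x)"
proof (induction n arbitrary: f g)
  case 0 then show ?case by (simp add: smooth_upto_0 pdiff_add)
next
  case (Suc n)
  have pf: "pdiff S f" and pg: "pdiff S g" using Suc.prems smooth_upto_Suc by blast+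
  have df: "smooth_upto n S (partial_deriv i f)" and dg: "smooth_upto n S (partial_deriv i g)" for i
    using Suc.prems smooth_upto_Suc by blast+
  show ?case unfolding smooth_upto_Suc
  proof safe
    show "pdiff S (\<lambda>x. f x + g x)" using pf pg by (rule pdiff_add)
    fix i
    have eq: "\<And>x. x \<in> S \<Longrightarrow> partial_deriv i (\<lambda>x. f x + g x) x = partial_deriv i f x + partial_deriv i g x"
      using pd_add[OF pf pg] by blast
    have "smooth_upto n S (\<lambda>x. partial_deriv i f x + partial_deriv i g x)"
      using Suc.IH[OF df dg] .
    then show "smooth_upto n S (partial_deriv i (\<lambda>x. f x + g x))"
      using smooth_upto_cong[OF assms, of "partial_deriv i (\<lambda>x. f x + g x)" "\<lambda>x. partial_deriv i f x + partial_deriv i g x" n] eq by blast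
  qed
qed

lemma smooth_upto_mult:
  assumes "open S" shows "smooth_upto n S f \<Longrightarrow> smooth_upto n S g \<Longrightarrow> smooth_upto n S (\<lambda>x. f x * g x)"
proof (induction n arbitrary: f g)
  case 0 then show ?case by (simp add: smooth_upto_0 pdiff_mult)
next
  case (Suc n)
  have pf: "pdiff S f" and pg: "pdiff S g" using Suc.prems smooth_upto_Suc by blast+
  have df: "smooth_upto n S (partial_deriv i f)" and dg: "smooth_upto n S (partial_deriv i g)" for i
    using Suc.prems smooth_upto_Suc by blast+
  have f': "smooth_upto n S f" and g': "smooth_upto n S g"
    using Suc.prems smooth_upto_mono by blast+
  show ?case unfolding smooth_upto_Suc
  proof safe
    show "pdiff S (\<lambda>x. f x * g x)" using pf pg by (rule pdiff_mult)
    fix i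
    have eq: "\<And>x. x \<in> S \<Longrightarrow> partial_deriv i (\<lambda>x. f x * g x) x = partial_deriv i f x * g x + f x * partial_deriv i g x"
      using pd_mult[OF pf pg] by blast
    have "smooth_upto n S (\<lambda>x. partial_deriv i f x * g x + f x * partial_deriv i g x)"
      by (rule smooth_upto_add[OF assms Suc.IH[OF df g'] Suc.IH[OF f' dg]])
    then show "smooth_upto n S (partial_deriv i (\<lambda>x. f x * g x))"
      using smooth_upto_cong[OF assms, of "partial_deriv i (\<lambda>x. f x * g x)" "\<lambda>x. partial_deriv i f x * g x + f x * partial_deriv i g x" n] eq by blast
  qed
qed

lemma smooth_on_add: "open S \<Longrightarrow> smooth_on S f \<Longrightarrow> smooth_on S g \<Longrightarrow> smooth_on S (\<lambda>x. f x + g x)"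
  by (simp add: smooth_on_upto smooth_upto_add)

lemma smooth_on_mult: "open S \<Longrightarrow> smooth_on S f \<Longrightarrow> smooth_on S g \<Longrightarrow> smooth_on S (\<lambda>x. f x * g x)"
  by (simp add: smooth_on_upto smooth_upto_mult)

lemma smooth_on_cmult: "open S \<Longrightarrow> smooth_on S f \<Longrightarrow> smooth_on S (\<lambda>x. c * f x)"
  using smooth_on_mult[OF _ smooth_on_const] by blast

lemma smooth_on_diff: "open S \<Longrightarrow> smooth_on S f \<Longrightarrow> smooth_on S g \<Longrightarrow> smooth_on S (\<lambda>x. f x - g x)"
  using smooth_on_add[of S f "\<lambda>x. (-1) * g x"] smooth_on_cmult[of S g "-1"] by simp

lemma smooth_on_sum:
  assumes "open S" "finite I" "\<And>i. i \<in> I \<Longrightarrow> smooth_on S (f i)"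
  shows "smooth_on S (\<lambda>x. \<Sum>i\<in>I. f i x)"
  using assms(2,3)
  by (induction I rule: finite_induct) (auto intro!: smooth_on_const smooth_on_add[OF assms(1)])

lemma pdiff_sum:
  assumes "finite I" "\<And>i. i \<in> I \<Longrightarrow> pdiff S (f i)"
  shows "pdiff S (\<lambda>x. \<Sum>i\<in>I. f i x)"
  using assms
  by (induction I rule: finite_induct) (auto intro!: pdiff_const pdiff_add)

lemma pd_sum:
  assumes "finite I" "\<And>i. i \<in> I \<Longrightarrow> pdiff S (f i)" "x \<in> S"
  shows "partial_deriv j (\<lambda>x. \<Sum>i\<in>I. f i x) x = (\<Sum>i\<in>I. partial_deriv j (f i) x)"
  using assms(1,2)
proof (induction I rule: finite_induct)
  case empty then show ?case by (simp add: pd_const)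
next
  case (insert a I)
  have "partial_deriv j (\<lambda>x. \<Sum>i\<in>insert a I. f i x) x = partial_deriv j (\<lambda>x. f a x + (\<Sum>i\<in>I. f i x)) x"
    using insert by simp
  also have "\<dots> = partial_deriv j (f a) x + partial_deriv j (\<lambda>x. \<Sum>i\<in>I. f i x) x"
    by (rule pd_add[OF _ pdiff_sum assms(3)]) (use insert in auto)
  finally show ?case using insert by simp
qed

lemma pd_cmult:
  assumes "pdiff S f" "x \<in> S"
  shows "partial_deriv i (\<lambda>x. c * f x) x = c * partial_deriv i f x"
  using pd_mult[OF pdiff_const assms] by (simp add: pd_const)

lemma pd_coord: "partial_deriv i (\<lambda>y. y $ j) x = (if j = i then 1 else 0)"
proof -
  have "((\<lambda>t. (x + t *\<^sub>R axis i 1) $ j) has_real_derivative (if j = i then 1 else 0)) (at 0)"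
    by (auto simp: axis_def intro!: derivative_eq_intros)
  then show ?thesis unfolding partial_deriv_def by (rule DERIV_imp_deriv)
qed

lemma pd_coord_fun: "partial_deriv i (\<lambda>y. y $ j) = (\<lambda>x. if j = i then 1 else 0)"
  by (rule ext) (rule pd_coord)

lemma pdiff_coord: "pdiff S (\<lambda>y. y $ j)"
  unfolding pdiff_def
  by (auto simp: axis_def intro!: continuous_intros derivative_intros)

lemma smooth_on_coord: "smooth_on S (\<lambda>y. y $ j)"
proof -
  have "smooth_upto n S (\<lambda>y. y $ j)" for n
    by (cases n) (auto simp: smooth_upto_0 smooth_upto_Suc pdiff_coord pd_coord_fun smooth_upto_const)
  then show ?thesis by (simp add: smooth_on_upto)
qed


abbreviation ax :: "'n::finite \<Rightarrow> real^'n" where "ax i \<equiv> axis i 1"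

lemma axis_inner: "inner (axis i (1::real)) y = y $ i"
  by (metis cart_eq_inner_axis inner_commute)

lemma norm_line_has_deriv:
  fixes y :: "real^'n::finite"
  assumes "y \<noteq> 0"
  shows "((\<lambda>t. norm (y + t *\<^sub>R axis i 1)) has_real_derivative y $ i / norm y) (at 0)"
proof -
  have l: "((\<lambda>t::real. y + t *\<^sub>R axis i 1) has_derivative (\<lambda>t. t *\<^sub>R axis i 1)) (at 0)"
    by (auto intro!: derivative_eq_intros)
  have n: "(norm has_derivative (\<lambda>h. inner h (sgn y))) (at ((\<lambda>t::real. y + t *\<^sub>R axis i 1) 0))"
    using has_derivative_norm[OF assms] by simp
  have "((\<lambda>t. norm (y + t *\<^sub>R axis i 1)) has_derivative (\<lambda>t. inner (t *\<^sub>R axis i 1) (sgn y))) (at 0)"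
    using has_derivative_compose[OF l n] by (simp add: o_def)
  moreover have "(\<lambda>t. inner (t *\<^sub>R axis i 1) (sgn y)) = (*) (y $ i / norm y)"
    by (rule ext) (simp add: sgn_div_norm axis_inner field_simps)
  ultimately show ?thesis by (simp add: has_field_derivative_def)
qed

lemma normpow_line_has_deriv:
  fixes y :: "real^'n::finite"
  assumes "y \<noteq> 0"
  shows "((\<lambda>t. norm (y + t *\<^sub>R axis i 1) powr b) has_real_derivative b * y $ i * norm y powr (b - 2)) (at 0)"
proof -
  have "((\<lambda>t. norm (y + t *\<^sub>R axis i 1) powr b) has_real_derivative
        b * norm (y + 0 *\<^sub>R axis i 1) powr (b - of_nat 1) * (y $ i / norm y)) (at 0)"
    by (rule DERIV_fun_powr[OF norm_line_has_deriv[OF assms]]) (use assms in simp)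
  moreover have "b * norm y powr (b - 1) * (y $ i / norm y) = b * y $ i * norm y powr (b - 2)"
    using assms by (simp add: powr_diff field_simps powr_add[symmetric] power2_eq_square)
  ultimately show ?thesis by simp
qed

lemma pd_normpow:
  fixes y :: "real^'n::finite"
  assumes "y \<noteq> 0"
  shows "partial_deriv i (\<lambda>y. norm y powr b) y = b * y $ i * norm y powr (b - 2)"
  unfolding partial_deriv_def by (rule DERIV_imp_deriv[OF normpow_line_has_deriv[OF assms]])

lemma pdiff_normpow: "pdiff (-{0}) (\<lambda>y::real^'n::finite. norm y powr b)"
  unfolding pdiff_def
proof (intro conjI allI ballI)
  show "continuous_on (- {0}) (\<lambda>y::real^'n. norm y powr b)"
    by (auto intro!: continuous_intros)
  fix i and x :: "real^'n" assume "x \<in> - {0}"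
  then show "(\<lambda>t. norm (x + t *\<^sub>R axis i 1) powr b) differentiable at 0"
    using normpow_line_has_deriv[of x i b] real_differentiable_def by auto
qed

lemma smooth_normpow: "smooth_on (-{0}) (\<lambda>y::real^'n::finite. norm y powr b)"
proof -
  have "smooth_upto n (-{0}) (\<lambda>y::real^'n. norm y powr b)" for n
  proof (induction n arbitrary: b)
    case 0 then show ?case by (simp add: smooth_upto_0 pdiff_normpow)
  next
    case (Suc n)
    show ?case unfolding smooth_upto_Suc
    proof safe
      show "pdiff (-{0}) (\<lambda>y::real^'n. norm y powr b)" by (rule pdiff_normpow)
      fix i
      have "smooth_upto n (-{0}) (\<lambda>y::real^'n. (b * y $ i) * norm y powr (b - 2))"
        by (rule smooth_upto_mult[OF _ smooth_upto_mult[OF _ smooth_upto_const] Suc.IH])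
          (use smooth_on_coord[unfolded smooth_on_upto] in auto)
      then show "smooth_upto n (-{0}) (partial_deriv i (\<lambda>y::real^'n. norm y powr b))"
        using smooth_upto_cong[of "-{0}" "partial_deriv i (\<lambda>y::real^'n. norm y powr b)"
            "\<lambda>y. (b * y $ i) * norm y powr (b - 2)" n] pd_normpow by auto
    qed
  qed
  then show ?thesis by (simp add: smooth_on_upto)
qed

lemma mvt_signed:
  fixes g g' :: "real \<Rightarrow> real"
  assumes "\<And>t. \<bar>t\<bar> \<le> \<bar>a\<bar> \<Longrightarrow> (g has_real_derivative g' t) (at t)"
  shows "\<exists>t. \<bar>t\<bar> \<le> \<bar>a\<bar> \<and> g a - g 0 = a * g' t"
proof (cases a "0::real" rule: linorder_cases)
  case less
  then obtain z where "a < z" "z < 0" "g 0 - g a = (0 - a) * g' z"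
    using MVT2[of a 0 g g'] assms by force
  then show ?thesis by (intro exI[of _ z]) (auto simp: algebra_simps)
next
  case equal then show ?thesis by auto
next
  case greater
  then obtain z where "0 < z" "z < a" "g a - g 0 = (a - 0) * g' z"
    using MVT2[of 0 a g g'] assms by force
  then show ?thesis by (intro exI[of _ z]) auto
qed

subsection \<open>Frechet differentiability from continuous partials\<close>

lemma basis_expansion: "(\<Sum>i\<in>UNIV. h $ i *\<^sub>R ax i) = (h::real^'n::finite)"
  by (simp add: vec_eq_iff axis_def if_distrib sum.delta cong: if_cong)

lemma norm_partial_sum_le:
  fixes h :: "real^'n::finite"
  shows "norm (\<Sum>i\<in>J. h $ i *\<^sub>R ax i) \<le> real (card J) * norm h"
proof -
  have "norm (\<Sum>i\<in>J. h $ i *\<^sub>R ax i) \<le> (\<Sum>i\<in>J. norm (h $ i *\<^sub>R ax i))"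
    by (rule norm_sum)
  also have "\<dots> \<le> (\<Sum>i\<in>J. norm h)"
    by (rule sum_mono) (simp add: component_le_norm_cart)
  also have "\<dots> = real (card J) * norm h" by simp
  finally show ?thesis .
qed

lemma frechet_from_partials:
  fixes F :: "real^'n::finite \<Rightarrow> real"
  assumes S: "open S" "x \<in> S" and pF: "pdiff S F"
    and cF: "\<And>j. continuous_on S (partial_deriv j F)"
  shows "(F has_derivative (\<lambda>h. \<Sum>j\<in>UNIV. h $ j * partial_deriv j F x)) (at x)"
proof -
  obtain r where r: "r > 0" "ball x r \<subseteq> S" using S openE by blast
  define C where "C = real CARD('n) + 1"
  have C: "C \<ge> 1" by (simp add: C_def)
  have main: "\<forall>e>0. \<exists>d>0. \<forall>h::real^'n. norm h < d \<longrightarrow>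
     \<bar>F (x + (\<Sum>i\<in>J. h $ i *\<^sub>R ax i)) - F x - (\<Sum>j\<in>J. h $ j * partial_deriv j F x)\<bar> \<le> e * norm h"
    if "finite J" for J
    using that
  proof (induction J rule: finite_induct)
    case empty
    then show ?case by (auto intro: exI[of _ 1])
  next
    case (insert j J)
    show ?case
    proof safe
      fix e :: real assume e: "e > 0"
      obtain d1 where d1: "d1 > 0" "\<And>h::real^'n. norm h < d1 \<Longrightarrow>
         \<bar>F (x + (\<Sum>i\<in>J. h $ i *\<^sub>R ax i)) - F x - (\<Sum>j\<in>J. h $ j * partial_deriv j F x)\<bar> \<le> e/2 * norm h"
        using insert.IH e by (meson half_gt_zero)
      have "continuous (at x) (partial_deriv j F)"
        using cF[of j] S continuous_on_eq_continuous_at by blast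
      then obtain d2 where d2: "d2 > 0" "\<And>z. dist z x < d2 \<Longrightarrow> dist (partial_deriv j F z) (partial_deriv j F x) < e/2"
        unfolding continuous_at_eps_delta using e by (meson half_gt_zero)
      define d where "d = min d1 (min d2 r / C)"
      have d: "d > 0" using d1 d2 r C by (simp add: d_def)
      show "\<exists>d>0. \<forall>h::real^'n. norm h < d \<longrightarrow>
          \<bar>F (x + (\<Sum>i\<in>insert j J. h $ i *\<^sub>R ax i)) - F x - (\<Sum>j\<in>insert j J. h $ j * partial_deriv j F x)\<bar> \<le> e * norm h"
      proof (intro exI[of _ d] conjI allI impI d)
        fix h :: "real^'n" assume h: "norm h < d"
        define p where "p = x + (\<Sum>i\<in>J. h $ i *\<^sub>R ax i)"
        have cardJ: "real (card J) \<le> real CARD('n)"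
          by (simp add: card_mono)
        have Ch: "C * norm h < min d2 r"
          using h C unfolding d_def by (simp add: field_simps)
        have near: "dist (p + t *\<^sub>R ax j) x < min d2 r" if "\<bar>t\<bar> \<le> \<bar>h $ j\<bar>" for t
        proof -
          have "dist (p + t *\<^sub>R ax j) x = norm ((\<Sum>i\<in>J. h $ i *\<^sub>R ax i) + t *\<^sub>R ax j)"
            by (simp add: p_def dist_norm)
          also have "\<dots> \<le> norm (\<Sum>i\<in>J. h $ i *\<^sub>R ax i) + \<bar>t\<bar>"
            by (rule order_trans[OF norm_triangle_ineq]) simp
          also have "\<dots> \<le> real (card J) * norm h + norm h"
            using norm_partial_sum_le[of h J] that component_le_norm_cart[of h j] by linarith
          also have "\<dots> \<le> C * norm h"
            using cardJ by (simp add: C_def algebra_simps mult_left_mono)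
          finally show ?thesis using Ch by linarith
        qed
        have inS: "p + t *\<^sub>R ax j \<in> S" if "\<bar>t\<bar> \<le> \<bar>h $ j\<bar>" for t
          using near[OF that] r(2) by (auto simp: dist_commute)
        have der: "((\<lambda>t. F (p + t *\<^sub>R ax j)) has_real_derivative partial_deriv j F (p + t *\<^sub>R ax j)) (at t)"
          if "\<bar>t\<bar> \<le> \<bar>h $ j\<bar>" for t
          by (rule pd_has_deriv_shift) (use pdiff_line[OF pF inS[OF that]] in simp)
        obtain t where t: "\<bar>t\<bar> \<le> \<bar>h $ j\<bar>"
          "F (p + h $ j *\<^sub>R ax j) - F (p + 0 *\<^sub>R ax j) = h $ j * partial_deriv j F (p + t *\<^sub>R ax j)"
          using mvt_signed[of "h $ j" "\<lambda>t. F (p + t *\<^sub>R ax j)", OF der] by blast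
        have "\<bar>partial_deriv j F (p + t *\<^sub>R ax j) - partial_deriv j F x\<bar> < e/2"
          using d2(2)[of "p + t *\<^sub>R ax j"] near[OF t(1)] by (simp add: dist_real_def)
        then have A: "\<bar>F (p + h $ j *\<^sub>R ax j) - F p - h $ j * partial_deriv j F x\<bar> \<le> e/2 * norm h"
        proof -
          assume a: "\<bar>partial_deriv j F (p + t *\<^sub>R ax j) - partial_deriv j F x\<bar> < e/2"
          have "\<bar>F (p + h $ j *\<^sub>R ax j) - F p - h $ j * partial_deriv j F x\<bar>
              = \<bar>h $ j\<bar> * \<bar>partial_deriv j F (p + t *\<^sub>R ax j) - partial_deriv j F x\<bar>"
            using t(2) by (simp add: abs_mult[symmetric] algebra_simps)
          also have "\<dots> \<le> norm h * (e/2)"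
            by (rule mult_mono) (use a component_le_norm_cart[of h j] in auto)
          finally show ?thesis by (simp add: mult.commute)
        qed
        have B: "\<bar>F p - F x - (\<Sum>j\<in>J. h $ j * partial_deriv j F x)\<bar> \<le> e/2 * norm h"
          using d1(2)[of h] h unfolding p_def d_def by simp
        have eq: "x + (\<Sum>i\<in>insert j J. h $ i *\<^sub>R ax i) = p + h $ j *\<^sub>R ax j"
          using insert.hyps by (simp add: p_def algebra_simps)
        show "\<bar>F (x + (\<Sum>i\<in>insert j J. h $ i *\<^sub>R ax i)) - F x - (\<Sum>j\<in>insert j J. h $ j * partial_deriv j F x)\<bar> \<le> e * norm h"
        proof -
          have ee: "e/2 * norm h + e/2 * norm h = e * norm h" by (simp add: field_simps)
          show ?thesis
          proof -
            have s2: "(\<Sum>j\<in>insert j J. h $ j * partial_deriv j F x) = h $ j * partial_deriv j F x + (\<Sum>j\<in>J. h $ j * partial_deriv j F x)"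
              using insert.hyps by simp
            show ?thesis unfolding eq s2 using A B ee unfolding abs_le_iff by linarith
          qed
        qed
      qed
    qed
  qed
  have bl: "bounded_linear (\<lambda>h::real^'n. \<Sum>j\<in>UNIV. h $ j * partial_deriv j F x)"
    by (intro bounded_linear_sum) (rule bounded_linear_compose[OF bounded_linear_mult_left bounded_linear_vec_nth])
  show ?thesis unfolding has_derivative_at_alt
  proof (intro conjI bl allI impI)
    fix e :: real assume "e > 0"
    then obtain d where d: "d > 0" "\<And>h::real^'n. norm h < d \<Longrightarrow>
       \<bar>F (x + h) - F x - (\<Sum>j\<in>UNIV. h $ j * partial_deriv j F x)\<bar> \<le> e * norm h"
      using main[of UNIV] unfolding basis_expansion by auto
    show "\<exists>d>0. \<forall>y. norm (y - x) < d \<longrightarrow>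
        norm (F y - F x - (\<Sum>j\<in>UNIV. (y - x) $ j * partial_deriv j F x)) \<le> e * norm (y - x)"
    proof (intro exI[of _ d] conjI allI impI d(1))
      fix y assume "norm (y - x) < d"
      from d(2)[OF this] show "norm (F y - F x - (\<Sum>j\<in>UNIV. (y - x) $ j * partial_deriv j F x)) \<le> e * norm (y - x)"
        by simp
    qed
  qed
qed


definition homog :: "real \<Rightarrow> (real^'n::finite \<Rightarrow> real) \<Rightarrow> bool" where
  "homog a G \<longleftrightarrow> (\<forall>y t. y \<noteq> 0 \<longrightarrow> t > 0 \<longrightarrow> G (t *\<^sub>R y) = t powr a * G y)"

lemma euler:
  fixes G :: "real^'n::finite \<Rightarrow> real"
  assumes pG: "pdiff (-{0}) G" and cG: "\<And>j. continuous_on (-{0}) (partial_deriv j G)"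
    and hG: "homog a G" and y: "y \<noteq> 0"
  shows "(\<Sum>j\<in>UNIV. y $ j * partial_deriv j G y) = a * G y"
proof -
  define E where "E = (\<Sum>j\<in>UNIV. y $ j * partial_deriv j G y)"
  have fr: "(G has_derivative (\<lambda>h. \<Sum>j\<in>UNIV. h $ j * partial_deriv j G y)) (at y)"
    by (rule frechet_from_partials[OF _ _ pG cG]) (use y in auto)
  have l: "((\<lambda>t::real. y + t *\<^sub>R y) has_derivative (\<lambda>t. t *\<^sub>R y)) (at 0)"
    by (auto intro!: derivative_eq_intros)
  have fr': "(G has_derivative (\<lambda>h. \<Sum>j\<in>UNIV. h $ j * partial_deriv j G y)) (at ((\<lambda>t::real. y + t *\<^sub>R y) 0))"
    using fr by simp
  have "((\<lambda>t. G (y + t *\<^sub>R y)) has_derivative (\<lambda>t. \<Sum>j\<in>UNIV. (t *\<^sub>R y) $ j * partial_deriv j G y)) (at 0)"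
    using has_derivative_compose[OF l fr'] by (simp add: o_def)
  moreover have "(\<lambda>t. \<Sum>j\<in>UNIV. (t *\<^sub>R y) $ j * partial_deriv j G y) = (*) E"
    by (rule ext) (unfold E_def sum_distrib_right, simp add: mult_ac)
  ultimately have d1: "((\<lambda>t. G (y + t *\<^sub>R y)) has_real_derivative E) (at 0)"
    by (simp add: has_field_derivative_def)
  have ev0: "\<forall>\<^sub>F t in nhds (0::real). t \<in> {-1<..}"
    by (rule eventually_nhds_in_open) auto
  have ev: "\<forall>\<^sub>F t in nhds (0::real). G (y + t *\<^sub>R y) = (1 + t) powr a * G y"
    using ev0
  proof (rule eventually_mono)
    fix t :: real assume "t \<in> {-1<..}"
    then have "1 + t > 0" by simp
    then have "G ((1 + t) *\<^sub>R y) = (1 + t) powr a * G y" using hG y by (simp add: homog_def)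
    then show "G (y + t *\<^sub>R y) = (1 + t) powr a * G y" by (simp add: algebra_simps)
  qed
  have "((\<lambda>t. (1 + t) powr a) has_real_derivative a * (1 + 0) powr (a - of_nat 1) * 1) (at (0::real))"
    by (rule DERIV_fun_powr) (auto intro!: derivative_eq_intros)
  then have d2: "((\<lambda>t. (1 + t) powr a * G y) has_real_derivative a * G y) (at 0)"
    using DERIV_cmult_right[of "\<lambda>t. (1 + t) powr a" "a * (1 + 0) powr (a - of_nat 1) * 1" 0 UNIV "G y"] by simp
  have "((\<lambda>t. G (y + t *\<^sub>R y)) has_real_derivative a * G y) (at 0)"
    using DERIV_cong_ev[OF refl ev refl] d2 by blast
  with d1 have "E = a * G y" by (rule DERIV_unique)
  then show ?thesis by (simp add: E_def)
qed

lemma homog_partial: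
  fixes G :: "real^'n::finite \<Rightarrow> real"
  assumes pG: "pdiff (-{0}) G" and hG: "homog a G"
  shows "homog (a - 1) (partial_deriv i G)"
  unfolding homog_def
proof (intro allI impI)
  fix y :: "real^'n" and t :: real assume y: "y \<noteq> 0" and t: "t > 0"
  have ev: "\<forall>\<^sub>F s in nhds (0::real). G (t *\<^sub>R y + s *\<^sub>R ax i) = t powr a * G (y + (s / t) *\<^sub>R ax i)"
  proof -
    have ev1: "\<forall>\<^sub>F s in nhds (0::real). y + s *\<^sub>R (inverse t *\<^sub>R ax i) \<in> -{0}"
      by (rule eventually_line_in_open) (use y in auto)
    show ?thesis using ev1
  proof (rule eventually_mono)
    fix s :: real assume s: "y + s *\<^sub>R inverse t *\<^sub>R ax i \<in> - {0}"
    have eq: "t *\<^sub>R y + s *\<^sub>R ax i = t *\<^sub>R (y + (s / t) *\<^sub>R ax i)"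
      using t by (simp add: algebra_simps)
    have "y + (s / t) *\<^sub>R ax i \<noteq> 0" using s by (simp add: divide_inverse mult.commute)
    then show "G (t *\<^sub>R y + s *\<^sub>R ax i) = t powr a * G (y + (s / t) *\<^sub>R ax i)"
      unfolding eq using hG t by (simp add: homog_def)
  qed
  qed
  have dq: "((\<lambda>s. s / t) has_real_derivative inverse t) (at 0)"
    by (auto intro!: derivative_eq_intros simp: divide_inverse)
  have dG: "((\<lambda>u. G (y + u *\<^sub>R ax i)) has_real_derivative partial_deriv i G y) (at ((\<lambda>s. s / t) 0))"
    using pd_has_deriv0[OF pdiff_line[OF pG]] y by simp
  have "((\<lambda>s. G (y + (s / t) *\<^sub>R ax i)) has_real_derivative partial_deriv i G y * inverse t) (at 0)"
    using DERIV_chain'[OF dq dG] by simp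
  then have "((\<lambda>s. t powr a * G (y + (s / t) *\<^sub>R ax i)) has_real_derivative t powr a * (partial_deriv i G y * inverse t)) (at 0)"
    by (rule DERIV_cmult)
  then have "((\<lambda>s. G (t *\<^sub>R y + s *\<^sub>R ax i)) has_real_derivative t powr a * (partial_deriv i G y * inverse t)) (at 0)"
    using DERIV_cong_ev[OF refl ev refl] by blast
  then have "partial_deriv i G (t *\<^sub>R y) = t powr a * (partial_deriv i G y * inverse t)"
    unfolding partial_deriv_def by (rule DERIV_imp_deriv)
  also have "\<dots> = t powr (a - 1) * partial_deriv i G y"
    using t by (simp add: powr_diff divide_inverse)
  finally show "partial_deriv i G (t *\<^sub>R y) = t powr (a - 1) * partial_deriv i G y" .
qed

lemma mixed_mvt:
  fixes F :: "real^'n::finite \<Rightarrow> real"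
  assumes h: "h > 0"
    and inS: "\<And>s t. 0 \<le> s \<Longrightarrow> s \<le> h \<Longrightarrow> 0 \<le> t \<Longrightarrow> t \<le> h \<Longrightarrow> x + s *\<^sub>R ax i + t *\<^sub>R ax j \<in> S"
    and pF: "pdiff S F" and pFi: "pdiff S (partial_deriv i F)"
  shows "\<exists>s t. 0 < s \<and> s < h \<and> 0 < t \<and> t < h \<and>
    F (x + h *\<^sub>R ax i + h *\<^sub>R ax j) - F (x + h *\<^sub>R ax i) - F (x + h *\<^sub>R ax j) + F x
      = h * h * partial_deriv j (partial_deriv i F) (x + s *\<^sub>R ax i + t *\<^sub>R ax j)"
proof -
  define g where "g s = F ((x + h *\<^sub>R ax j) + s *\<^sub>R ax i) - F (x + s *\<^sub>R ax i)" for s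
  define g' where "g' s = partial_deriv i F ((x + h *\<^sub>R ax j) + s *\<^sub>R ax i) - partial_deriv i F (x + s *\<^sub>R ax i)" for s
  have dg: "DERIV g s :> g' s" if "0 \<le> s" "s \<le> h" for s
  proof -
    have m1: "(x + h *\<^sub>R ax j) + s *\<^sub>R ax i \<in> S"
      using inS[of s h] that h by (simp add: algebra_simps)
    have m2: "x + s *\<^sub>R ax i \<in> S"
      using inS[of s 0] that h by simp
    show ?thesis unfolding g_def g'_def
      by (intro DERIV_diff pd_has_deriv_shift pdiff_line[OF pF] m1 m2)
  qed
  obtain \<sigma> where \<sigma>: "0 < \<sigma>" "\<sigma> < h" "g h - g 0 = (h - 0) * g' \<sigma>"
    using MVT2[of 0 h g g'] dg h by auto
  define k where "k t = partial_deriv i F ((x + \<sigma> *\<^sub>R ax i) + t *\<^sub>R ax j)" for t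
  have dk: "DERIV k t :> partial_deriv j (partial_deriv i F) ((x + \<sigma> *\<^sub>R ax i) + t *\<^sub>R ax j)"
    if "0 \<le> t" "t \<le> h" for t
  proof -
    have m: "(x + \<sigma> *\<^sub>R ax i) + t *\<^sub>R ax j \<in> S" using inS[of \<sigma> t] that \<sigma> by simp
    show ?thesis unfolding k_def by (intro pd_has_deriv_shift pdiff_line[OF pFi] m)
  qed
  obtain \<tau> where \<tau>: "0 < \<tau>" "\<tau> < h"
    "k h - k 0 = (h - 0) * partial_deriv j (partial_deriv i F) ((x + \<sigma> *\<^sub>R ax i) + \<tau> *\<^sub>R ax j)"
    using MVT2[of 0 h k "\<lambda>t. partial_deriv j (partial_deriv i F) ((x + \<sigma> *\<^sub>R ax i) + t *\<^sub>R ax j)"] dk h by auto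
  have "g' \<sigma> = k h - k 0"
    unfolding g'_def k_def by (simp add: algebra_simps)
  moreover have "g h - g 0 = F (x + h *\<^sub>R ax i + h *\<^sub>R ax j) - F (x + h *\<^sub>R ax i) - F (x + h *\<^sub>R ax j) + F x"
    unfolding g_def by (simp add: algebra_simps)
  ultimately show ?thesis using \<sigma> \<tau> by (intro exI[of _ \<sigma>] exI[of _ \<tau>]) auto
qed

lemma norm_two_axes: "norm (s *\<^sub>R ax i + t *\<^sub>R ax j :: real^'n::finite) \<le> \<bar>s\<bar> + \<bar>t\<bar>"
  using norm_triangle_ineq[of "s *\<^sub>R ax i" "t *\<^sub>R ax j"] by simp

lemma schwarz:
  fixes F :: "real^'n::finite \<Rightarrow> real"
  assumes S: "open S" "x \<in> S" and pF: "pdiff S F"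
    and pFi: "pdiff S (partial_deriv i F)" and pFj: "pdiff S (partial_deriv j F)"
    and c1: "continuous_on S (partial_deriv j (partial_deriv i F))"
    and c2: "continuous_on S (partial_deriv i (partial_deriv j F))"
  shows "partial_deriv j (partial_deriv i F) x = partial_deriv i (partial_deriv j F) x"
proof (rule ccontr)
  define A where "A = partial_deriv j (partial_deriv i F) x"
  define B where "B = partial_deriv i (partial_deriv j F) x"
  assume "partial_deriv j (partial_deriv i F) x \<noteq> partial_deriv i (partial_deriv j F) x"
  then have ne: "A \<noteq> B" by (simp add: A_def B_def)
  define e where "e = \<bar>A - B\<bar> / 2"
  have e: "e > 0" using ne by (simp add: e_def)
  obtain r where r: "r > 0" "ball x r \<subseteq> S" using S openE by blast
  have "continuous (at x) (partial_deriv j (partial_deriv i F))"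
    using c1 S continuous_on_eq_continuous_at by blast
  then obtain d1 where d1: "d1 > 0" "\<And>z. dist z x < d1 \<Longrightarrow> dist (partial_deriv j (partial_deriv i F) z) A < e"
    unfolding continuous_at_eps_delta A_def using e by blast
  have "continuous (at x) (partial_deriv i (partial_deriv j F))"
    using c2 S continuous_on_eq_continuous_at by blast
  then obtain d2 where d2: "d2 > 0" "\<And>z. dist z x < d2 \<Longrightarrow> dist (partial_deriv i (partial_deriv j F) z) B < e"
    unfolding continuous_at_eps_delta B_def using e by blast
  define h where "h = min r (min d1 d2) / 3"
  have h: "h > 0" using r d1 d2 by (simp add: h_def)
  have near: "dist (x + s *\<^sub>R ax k + t *\<^sub>R ax l) x < min r (min d1 d2)"
    if "0 \<le> s" "s \<le> h" "0 \<le> t" "t \<le> h" for s t and k l :: 'n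
  proof -
    have "dist (x + s *\<^sub>R ax k + t *\<^sub>R ax l) x = norm (s *\<^sub>R ax k + t *\<^sub>R ax l)"
      by (simp add: dist_norm)
    also have "\<dots> \<le> \<bar>s\<bar> + \<bar>t\<bar>" by (rule norm_two_axes)
    also have "\<dots> < min r (min d1 d2)" using that h r d1 d2 by (simp add: h_def)
    finally show ?thesis .
  qed
  have inS: "x + s *\<^sub>R ax k + t *\<^sub>R ax l \<in> S"
    if "0 \<le> s" "s \<le> h" "0 \<le> t" "t \<le> h" for s t and k l :: 'n
    using near[OF that, of k l] r by (auto simp: dist_commute)
  obtain s1 t1 where st1: "0 < s1" "s1 < h" "0 < t1" "t1 < h"
    "F (x + h *\<^sub>R ax i + h *\<^sub>R ax j) - F (x + h *\<^sub>R ax i) - F (x + h *\<^sub>R ax j) + F x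
      = h * h * partial_deriv j (partial_deriv i F) (x + s1 *\<^sub>R ax i + t1 *\<^sub>R ax j)"
    using mixed_mvt[OF h inS pF pFi] by blast
  obtain s2 t2 where st2: "0 < s2" "s2 < h" "0 < t2" "t2 < h"
    "F (x + h *\<^sub>R ax j + h *\<^sub>R ax i) - F (x + h *\<^sub>R ax j) - F (x + h *\<^sub>R ax i) + F x
      = h * h * partial_deriv i (partial_deriv j F) (x + s2 *\<^sub>R ax j + t2 *\<^sub>R ax i)"
    using mixed_mvt[OF h inS pF pFj] by blast
  have veq: "x + h *\<^sub>R ax j + h *\<^sub>R ax i = x + h *\<^sub>R ax i + h *\<^sub>R ax j" by (simp add: algebra_simps)
  have "h * h * partial_deriv j (partial_deriv i F) (x + s1 *\<^sub>R ax i + t1 *\<^sub>R ax j)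
      = h * h * partial_deriv i (partial_deriv j F) (x + s2 *\<^sub>R ax j + t2 *\<^sub>R ax i)"
    using st1(5) st2(5)[unfolded veq] by linarith
  then have eq: "partial_deriv j (partial_deriv i F) (x + s1 *\<^sub>R ax i + t1 *\<^sub>R ax j)
      = partial_deriv i (partial_deriv j F) (x + s2 *\<^sub>R ax j + t2 *\<^sub>R ax i)"
    using h by simp
  have a1: "dist (partial_deriv j (partial_deriv i F) (x + s1 *\<^sub>R ax i + t1 *\<^sub>R ax j)) A < e"
    using d1(2) near[of s1 t1 i j] st1 by force
  have a2: "dist (partial_deriv i (partial_deriv j F) (x + s2 *\<^sub>R ax j + t2 *\<^sub>R ax i)) B < e"
    using d2(2) near[of s2 t2 j i] st2 by force
  from a1 a2 eq have "\<bar>A - B\<bar> < 2 * e" by (simp add: dist_real_def)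
  then show False by (simp add: e_def)
qed


lemma open_O: "open (-{0::real^'n::finite})" by (simp add: open_Compl)

lemma sm_pdiff: "smooth_on S f \<Longrightarrow> pdiff S f" by (rule smooth_on_imp_pdiff)
lemma sm_d: "smooth_on S f \<Longrightarrow> smooth_on S (partial_deriv i f)" by (rule smooth_on_partial)
lemma sm_pd: "smooth_on S f \<Longrightarrow> pdiff S (partial_deriv i f)" by (rule sm_pdiff[OF sm_d])
lemma sm_pdd: "smooth_on S f \<Longrightarrow> pdiff S (partial_deriv j (partial_deriv i f))" by (rule sm_pdiff[OF sm_d[OF sm_d]])
lemma sm_cont: "smooth_on S f \<Longrightarrow> continuous_on S f" using sm_pdiff pdiff_def by blast

lemma sum_sq_norm: "(\<Sum>j\<in>UNIV. x $ j * x $ j) = norm (x::real^'n::finite) ^ 2"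
  by (simp add: power2_norm_eq_inner inner_vec_def)

subsection \<open>Laplacian rules\<close>

lemma lap_cong:
  assumes "open S" "x \<in> S" "\<And>y. y \<in> S \<Longrightarrow> f y = g y"
  shows "euclid_laplacian f x = euclid_laplacian g x"
  unfolding euclid_laplacian_def
proof (rule sum.cong[OF refl])
  fix j
  have "\<And>z. z \<in> S \<Longrightarrow> partial_deriv j f z = partial_deriv j g z"
    by (rule partial_deriv_cong[OF assms(1) _ assms(3)])
  then show "partial_deriv j (partial_deriv j f) x = partial_deriv j (partial_deriv j g) x"
    by (rule partial_deriv_cong[OF assms(1,2)])
qed

lemma lap_add:
  assumes S: "open S" "x \<in> S" and f: "smooth_on S f" and g: "smooth_on S g"
  shows "euclid_laplacian (\<lambda>y. f y + g y) x = euclid_laplacian f x + euclid_laplacian g x"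
proof -
  have "partial_deriv j (partial_deriv j (\<lambda>y. f y + g y)) x
      = partial_deriv j (partial_deriv j f) x + partial_deriv j (partial_deriv j g) x" for j
  proof -
    have "\<And>z. z \<in> S \<Longrightarrow> partial_deriv j (\<lambda>y. f y + g y) z = partial_deriv j f z + partial_deriv j g z"
      by (rule pd_add[OF sm_pdiff[OF f] sm_pdiff[OF g]])
    then have "partial_deriv j (partial_deriv j (\<lambda>y. f y + g y)) x
        = partial_deriv j (\<lambda>z. partial_deriv j f z + partial_deriv j g z) x"
      by (rule partial_deriv_cong[OF S])
    also have "\<dots> = partial_deriv j (partial_deriv j f) x + partial_deriv j (partial_deriv j g) x"
      by (rule pd_add[OF sm_pd[OF f] sm_pd[OF g] S(2)])
    finally show ?thesis .
  qed
  then show ?thesis unfolding euclid_laplacian_def by (simp add: sum.distrib)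
qed

lemma lap_cmult:
  assumes S: "open S" "x \<in> S" and f: "smooth_on S f"
  shows "euclid_laplacian (\<lambda>y. c * f y) x = c * euclid_laplacian f x"
proof -
  have "partial_deriv j (partial_deriv j (\<lambda>y. c * f y)) x = c * partial_deriv j (partial_deriv j f) x" for j
  proof -
    have "\<And>z. z \<in> S \<Longrightarrow> partial_deriv j (\<lambda>y. c * f y) z = c * partial_deriv j f z"
      by (rule pd_cmult[OF sm_pdiff[OF f]])
    then have "partial_deriv j (partial_deriv j (\<lambda>y. c * f y)) x = partial_deriv j (\<lambda>z. c * partial_deriv j f z) x"
      by (rule partial_deriv_cong[OF S])
    also have "\<dots> = c * partial_deriv j (partial_deriv j f) x"
      by (rule pd_cmult[OF sm_pd[OF f] S(2)])
    finally show ?thesis .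
  qed
  then show ?thesis unfolding euclid_laplacian_def by (simp add: sum_distrib_left)
qed

lemma lap_const: "euclid_laplacian (\<lambda>y. c) x = 0"
  unfolding euclid_laplacian_def by (simp add: pd_const_fun pd_const)

lemma lap_sum:
  assumes S: "open S" "x \<in> S" and fin: "finite I" and f: "\<And>i. i \<in> I \<Longrightarrow> smooth_on S (f i)"
  shows "euclid_laplacian (\<lambda>y. \<Sum>i\<in>I. f i y) x = (\<Sum>i\<in>I. euclid_laplacian (f i) x)"
  using fin f
proof (induction I rule: finite_induct)
  case empty then show ?case by (simp add: lap_const)
next
  case (insert a I)
  have "euclid_laplacian (\<lambda>y. \<Sum>i\<in>insert a I. f i y) x = euclid_laplacian (\<lambda>y. f a y + (\<Sum>i\<in>I. f i y)) x"
    using insert.hyps by simp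
  also have "\<dots> = euclid_laplacian (f a) x + euclid_laplacian (\<lambda>y. \<Sum>i\<in>I. f i y) x"
    by (rule lap_add[OF S]) (use insert in \<open>auto intro!: smooth_on_sum S\<close>)
  finally show ?case using insert by simp
qed

lemma lap_mult:
  assumes S: "open S" "x \<in> S" and P: "smooth_on S P" and G: "smooth_on S G"
  shows "euclid_laplacian (\<lambda>y. P y * G y) x
    = P x * euclid_laplacian G x + 2 * (\<Sum>j\<in>UNIV. partial_deriv j P x * partial_deriv j G x)
      + euclid_laplacian P x * G x"
proof -
  have eqj: "partial_deriv j (partial_deriv j (\<lambda>y. P y * G y)) x
      = partial_deriv j (partial_deriv j P) x * G x + 2 * (partial_deriv j P x * partial_deriv j G x)
        + P x * partial_deriv j (partial_deriv j G) x" for j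
  proof -
    have "\<And>z. z \<in> S \<Longrightarrow> partial_deriv j (\<lambda>y. P y * G y) z = partial_deriv j P z * G z + P z * partial_deriv j G z"
      by (rule pd_mult[OF sm_pdiff[OF P] sm_pdiff[OF G]])
    then have "partial_deriv j (partial_deriv j (\<lambda>y. P y * G y)) x
        = partial_deriv j (\<lambda>z. partial_deriv j P z * G z + P z * partial_deriv j G z) x"
      by (rule partial_deriv_cong[OF S])
    also have "\<dots> = partial_deriv j (\<lambda>z. partial_deriv j P z * G z) x + partial_deriv j (\<lambda>z. P z * partial_deriv j G z) x"
      by (rule pd_add[OF pdiff_mult[OF sm_pd[OF P] sm_pdiff[OF G]] pdiff_mult[OF sm_pdiff[OF P] sm_pd[OF G]] S(2)])
    also have "partial_deriv j (\<lambda>z. partial_deriv j P z * G z) x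
        = partial_deriv j (partial_deriv j P) x * G x + partial_deriv j P x * partial_deriv j G x"
      by (rule pd_mult[OF sm_pd[OF P] sm_pdiff[OF G] S(2)])
    also have "partial_deriv j (\<lambda>z. P z * partial_deriv j G z) x
        = partial_deriv j P x * partial_deriv j G x + P x * partial_deriv j (partial_deriv j G) x"
      by (rule pd_mult[OF sm_pdiff[OF P] sm_pd[OF G] S(2)])
    finally show ?thesis by simp
  qed
  have "(\<Sum>j\<in>UNIV. partial_deriv j (partial_deriv j P) x * G x + 2 * (partial_deriv j P x * partial_deriv j G x)
        + P x * partial_deriv j (partial_deriv j G) x)
      = (\<Sum>j\<in>UNIV. partial_deriv j (partial_deriv j P) x) * G x + 2 * (\<Sum>j\<in>UNIV. partial_deriv j P x * partial_deriv j G x)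
        + P x * (\<Sum>j\<in>UNIV. partial_deriv j (partial_deriv j G) x)"
    by (simp only: sum.distrib sum_distrib_left sum_distrib_right)
  then show ?thesis unfolding euclid_laplacian_def eqj by simp
qed

lemma lap_normpow:
  fixes x :: "real^'n::finite"
  assumes x: "x \<noteq> 0"
  shows "euclid_laplacian (\<lambda>y. norm y powr b) x = b * (b + real CARD('n) - 2) * norm x powr (b - 2)"
proof -
  have O: "open (-{0::real^'n})" "x \<in> -{0}" using x by (auto simp: open_O)
  have eqj: "partial_deriv j (partial_deriv j (\<lambda>y. norm y powr b)) x
      = b * norm x powr (b - 2) + b * (b - 2) * (x $ j * x $ j) * norm x powr (b - 4)" for j
  proof -
    have "\<And>z. z \<in> -{0} \<Longrightarrow> partial_deriv j (\<lambda>y::real^'n. norm y powr b) z = (b * z $ j) * norm z powr (b - 2)"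
      using pd_normpow by auto
    then have "partial_deriv j (partial_deriv j (\<lambda>y. norm y powr b)) x
        = partial_deriv j (\<lambda>z. (b * z $ j) * norm z powr (b - 2)) x"
      by (rule partial_deriv_cong[OF O])
    also have "\<dots> = partial_deriv j (\<lambda>z. b * z $ j) x * norm x powr (b - 2) + (b * x $ j) * partial_deriv j (\<lambda>z. norm z powr (b - 2)) x"
      by (rule pd_mult[OF _ pdiff_normpow O(2)]) (rule pdiff_mult[OF pdiff_const pdiff_coord])
    finally have r: "partial_deriv j (partial_deriv j (\<lambda>y. norm y powr b)) x = partial_deriv j (\<lambda>z. b * z $ j) x * norm x powr (b - 2) + (b * x $ j) * partial_deriv j (\<lambda>z. norm z powr (b - 2)) x" .
    have r1: "partial_deriv j (\<lambda>z. b * z $ j) x = b"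
      using pd_cmult[OF pdiff_coord O(2), of j b j] by (simp add: pd_coord)
    have r2: "partial_deriv j (\<lambda>z. norm z powr (b - 2)) x = (b - 2) * x $ j * norm x powr (b - 4)"
      using pd_normpow[OF x, of j "b - 2"] by simp
    show ?thesis unfolding r r1 r2 by (simp only: mult_ac)
  qed
  have n2: "norm x ^ 2 * norm x powr (b - 4) = norm x powr (b - 2)"
  proof -
    have nx: "norm x > 0" using x by simp
    have "norm x ^ 2 = norm x powr 2" using nx by (simp add: powr_numeral)
    moreover have "norm x powr (2 + (b - 4)) = norm x powr 2 * norm x powr (b - 4)" by (rule powr_add)
    moreover have "2 + (b - 4) = b - 2" by simp
    ultimately show ?thesis by simp
  qed
  have "euclid_laplacian (\<lambda>y. norm y powr b) x
      = real CARD('n) * (b * norm x powr (b - 2)) + b * (b - 2) * (\<Sum>j\<in>UNIV. x $ j * x $ j) * norm x powr (b - 4)"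
    unfolding euclid_laplacian_def eqj by (simp only: sum.distrib sum_distrib_left sum_distrib_right sum_constant mult.assoc)
  also have "\<dots> = real CARD('n) * (b * norm x powr (b - 2)) + b * (b - 2) * norm x powr (b - 2)"
    unfolding sum_sq_norm using n2 by (simp add: algebra_simps)
  finally show ?thesis by (simp add: algebra_simps)
qed


lemma hom_ext_homog: "homog 0 (hom_ext (f::real^'n::finite \<Rightarrow> real))"
  unfolding homog_def hom_ext_def
proof (intro allI impI)
  fix y :: "real^'n" and t :: real assume y: "y \<noteq> 0" and t: "t > 0"
  have n: "norm (t *\<^sub>R y) = t * norm y" using t by simp
  have e: "(t *\<^sub>R y) /\<^sub>R norm (t *\<^sub>R y) = y /\<^sub>R norm y"
    unfolding n using t y by (simp add: scaleR_scaleR field_simps)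
  show "f ((t *\<^sub>R y) /\<^sub>R norm (t *\<^sub>R y)) = t powr 0 * f (y /\<^sub>R norm y)"
    by (subst e) (use t in simp)
qed

lemma hom_ext_on_sphere: "norm y = 1 \<Longrightarrow> hom_ext f y = f y"
  by (simp add: hom_ext_def)

lemma hom_ext_of_homog:
  fixes G :: "real^'n::finite \<Rightarrow> real"
  assumes hG: "homog a G" and gG: "\<And>y. norm y = 1 \<Longrightarrow> g y = G y" and y: "y \<noteq> 0"
  shows "hom_ext g y = norm y powr (-a) * G y"
proof -
  have n: "norm (y /\<^sub>R norm y) = 1" using y by simp
  have "hom_ext g y = G (inverse (norm y) *\<^sub>R y)" unfolding hom_ext_def using gG[OF n] by simp
  also have "\<dots> = inverse (norm y) powr a * G y" using hG y by (simp add: homog_def)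
  also have "\<dots> = norm y powr (-a) * G y" using y by (simp add: powr_minus inverse_powr)
  finally show ?thesis .
qed

lemma SS_of_homog:
  fixes G :: "real^'n::finite \<Rightarrow> real"
  assumes sG: "smooth_on (-{0}) G" and hG: "homog a G" and gG: "\<And>y. norm y = 1 \<Longrightarrow> g y = G y"
  shows "smooth_on_sphere g"
proof -
  have "smooth_on (-{0}) (\<lambda>y. norm y powr (-a) * G y)"
    by (rule smooth_on_mult[OF open_O smooth_normpow sG])
  then show ?thesis unfolding smooth_on_sphere_def
    using smooth_on_cong[OF open_O, of "hom_ext g" "\<lambda>y. norm y powr (-a) * G y"] hom_ext_of_homog[OF hG gG]
    by auto
qed

lemma smooth_C1:
  assumes "smooth_on S G"
  shows "pdiff S G" "\<And>j. continuous_on S (partial_deriv j G)"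
  using assms sm_pdiff sm_cont sm_d by blast+

lemma lap_homog:
  fixes G :: "real^'n::finite \<Rightarrow> real"
  assumes sG: "smooth_on (-{0}) G" and hG: "homog a G" and gG: "\<And>y. norm y = 1 \<Longrightarrow> g y = G y"
    and x: "norm x = 1"
  shows "sphere_laplacian g x = euclid_laplacian G x - a * (a + real CARD('n) - 2) * G x"
proof -
  have x0: "x \<noteq> 0" and xO: "x \<in> -{0}" using x by auto
  have "sphere_laplacian g x = euclid_laplacian (\<lambda>y. norm y powr (-a) * G y) x"
    unfolding sphere_laplacian_def
    by (rule lap_cong[OF open_O xO]) (use hom_ext_of_homog[OF hG gG] in auto)
  also have "\<dots> = norm x powr (-a) * euclid_laplacian G x
      + 2 * (\<Sum>j\<in>UNIV. partial_deriv j (\<lambda>y. norm y powr (-a)) x * partial_deriv j G x)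
      + euclid_laplacian (\<lambda>y. norm y powr (-a)) x * G x"
    by (rule lap_mult[OF open_O xO smooth_normpow sG])
  also have "(\<Sum>j\<in>UNIV. partial_deriv j (\<lambda>y. norm y powr (-a)) x * partial_deriv j G x)
      = (-a) * (\<Sum>j\<in>UNIV. x $ j * partial_deriv j G x)"
    using x0 x by (simp add: pd_normpow sum_distrib_left mult.assoc)
  also have "(\<Sum>j\<in>UNIV. x $ j * partial_deriv j G x) = a * G x"
    by (rule euler[OF smooth_C1[OF sG] hG x0])
  also have "euclid_laplacian (\<lambda>y. norm y powr (-a)) x = (-a) * (-a + real CARD('n) - 2)"
    using lap_normpow[OF x0, of "-a"] x by simp
  finally show ?thesis using x by (simp add: algebra_simps)
qed

lemma T_homog:
  fixes G :: "real^'n::finite \<Rightarrow> real"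
  assumes sG: "smooth_on (-{0}) G" and hG: "homog a G" and gG: "\<And>y. norm y = 1 \<Longrightarrow> g y = G y"
    and x: "norm x = 1"
  shows "partial_deriv i (hom_ext g) x = partial_deriv i G x - a * x $ i * G x"
proof -
  have x0: "x \<noteq> 0" and xO: "x \<in> -{0}" using x by auto
  have "partial_deriv i (hom_ext g) x = partial_deriv i (\<lambda>y. norm y powr (-a) * G y) x"
    by (rule partial_deriv_cong[OF open_O xO]) (use hom_ext_of_homog[OF hG gG] in auto)
  also have "\<dots> = partial_deriv i (\<lambda>y. norm y powr (-a)) x * G x + norm x powr (-a) * partial_deriv i G x"
    by (rule pd_mult[OF pdiff_normpow sm_pdiff[OF sG] xO])
  finally show ?thesis using x x0 by (simp add: pd_normpow)
qed

lemma homog_sum: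
  assumes "finite I" "\<And>i. i \<in> I \<Longrightarrow> homog a (f i)"
  shows "homog a (\<lambda>y. \<Sum>i\<in>I. f i y)"
  using assms unfolding homog_def by (simp add: sum_distrib_left)

lemma lap_coord: "euclid_laplacian (\<lambda>y. y $ i) x = 0"
  unfolding euclid_laplacian_def by (simp add: pd_coord_fun pd_const)

subsection \<open>Operators on the sphere\<close>

definition Tp :: "'n::finite \<Rightarrow> (real^'n \<Rightarrow> real) \<Rightarrow> real^'n \<Rightarrow> real" where
  "Tp i h = partial_deriv i (hom_ext h)"

lemma sph_dim_eq: "sph_dim TYPE('n::finite) = real CARD('n) - 1"
  by (simp add: sph_dim_def)

context
  fixes h :: "real^'n::finite \<Rightarrow> real"
  assumes SS: "smooth_on_sphere h"
begin

definition "FF = hom_ext h"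

lemma sF: "smooth_on (-{0}) FF" using SS by (simp add: smooth_on_sphere_def FF_def)

lemma hF: "homog 0 FF" unfolding FF_def by (rule hom_ext_homog)

lemma sGa: "smooth_on (-{0}) (\<lambda>y. y $ i * FF y)"
  by (rule smooth_on_mult[OF open_O smooth_on_coord sF])

lemma hGa: "homog 1 (\<lambda>y. y $ i * FF y)"
  using hF unfolding homog_def by simp

lemma gGa: "norm y = 1 \<Longrightarrow> y $ i * h y = y $ i * FF y"
  by (simp add: FF_def hom_ext_on_sphere)

lemma SS_mult_coord: "smooth_on_sphere (\<lambda>y. y $ i * h y)"
  by (rule SS_of_homog[OF sGa hGa gGa])

lemma hGb: "homog (-1) (partial_deriv i FF)"
  using homog_partial[OF sm_pdiff[OF sF] hF, of i] by simp

lemma SS_Tp: "smooth_on_sphere (Tp i h)"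
  by (rule SS_of_homog[OF sm_d[OF sF] hGb]) (simp add: Tp_def FF_def)

lemma sGc: "smooth_on (-{0}) (euclid_laplacian FF)"
proof -
  have "smooth_on (-{0}) (\<lambda>y. \<Sum>j\<in>UNIV. partial_deriv j (partial_deriv j FF) y)"
    by (rule smooth_on_sum[OF open_O]) (auto intro!: sm_d sF)
  then show ?thesis by (simp add: euclid_laplacian_def[abs_def])
qed

lemma hGc: "homog (-2) (euclid_laplacian FF)"
proof -
  have "homog (-2) (partial_deriv j (partial_deriv j FF))" for j
    using homog_partial[OF sm_pdiff[OF sm_d[OF sF]] hGb, of j] by simp
  then have "homog (-2) (\<lambda>y. \<Sum>j\<in>UNIV. partial_deriv j (partial_deriv j FF) y)"
    by (intro homog_sum) auto
  then show ?thesis by (simp add: euclid_laplacian_def[abs_def])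
qed

lemma SS_Lap: "smooth_on_sphere (sphere_laplacian h)"
  by (rule SS_of_homog[OF sGc hGc]) (simp add: sphere_laplacian_def FF_def)

lemma lap_partial_comm:
  assumes x: "x \<in> -{0}"
  shows "euclid_laplacian (partial_deriv i FF) x = partial_deriv i (euclid_laplacian FF) x"
proof -
  have "partial_deriv j (partial_deriv j (partial_deriv i FF)) x = partial_deriv i (partial_deriv j (partial_deriv j FF)) x" for j
  proof -
    have "\<And>z. z \<in> -{0} \<Longrightarrow> partial_deriv j (partial_deriv i FF) z = partial_deriv i (partial_deriv j FF) z"
      by (rule schwarz[OF open_O _ sm_pdiff[OF sF] sm_pd[OF sF] sm_pd[OF sF] sm_cont[OF sm_d[OF sm_d[OF sF]]] sm_cont[OF sm_d[OF sm_d[OF sF]]]])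
    then have "partial_deriv j (partial_deriv j (partial_deriv i FF)) x = partial_deriv j (partial_deriv i (partial_deriv j FF)) x"
      by (rule partial_deriv_cong[OF open_O x])
    also have "\<dots> = partial_deriv i (partial_deriv j (partial_deriv j FF)) x"
      by (rule schwarz[OF open_O x sm_pd[OF sF] sm_pdd[OF sF] sm_pdd[OF sF] sm_cont[OF sm_d[OF sm_d[OF sm_d[OF sF]]]] sm_cont[OF sm_d[OF sm_d[OF sm_d[OF sF]]]]])
    finally show ?thesis .
  qed
  then have "euclid_laplacian (partial_deriv i FF) x = (\<Sum>j\<in>UNIV. partial_deriv i (partial_deriv j (partial_deriv j FF)) x)"
    by (simp add: euclid_laplacian_def)
  also have "\<dots> = partial_deriv i (\<lambda>y. \<Sum>j\<in>UNIV. partial_deriv j (partial_deriv j FF) y) x"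
    by (rule pd_sum[symmetric]) (auto intro!: sm_pdd sF x)
  finally show ?thesis by (simp add: euclid_laplacian_def[abs_def])
qed

lemma L_P:
  assumes x: "norm x = 1"
  shows "sphere_laplacian (\<lambda>y. y $ i * h y) x
    = x $ i * sphere_laplacian h x + 2 * Tp i h x - sph_dim TYPE('n) * x $ i * h x"
proof -
  have x0: "x \<in> -{0}" using x by auto
  have "sphere_laplacian (\<lambda>y. y $ i * h y) x = euclid_laplacian (\<lambda>y. y $ i * FF y) x - 1 * (1 + real CARD('n) - 2) * (x $ i * FF x)"
    by (rule lap_homog[OF sGa hGa gGa x])
  also have "euclid_laplacian (\<lambda>y. y $ i * FF y) x
      = x $ i * euclid_laplacian FF x + 2 * (\<Sum>j\<in>UNIV. partial_deriv j (\<lambda>y. y $ i) x * partial_deriv j FF x)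
        + euclid_laplacian (\<lambda>y. y $ i) x * FF x"
    by (rule lap_mult[OF open_O x0 smooth_on_coord sF])
  also have "(\<Sum>j\<in>UNIV. partial_deriv j (\<lambda>y. y $ i) x * partial_deriv j FF x) = partial_deriv i FF x"
  proof -
    have "\<And>j. partial_deriv j (\<lambda>y. y $ i) x * partial_deriv j FF x = (if i = j then partial_deriv j FF x else 0)"
      by (simp add: pd_coord)
    then show ?thesis by simp
  qed
  finally show ?thesis using x
    by (simp add: lap_coord sph_dim_eq Tp_def sphere_laplacian_def FF_def hom_ext_on_sphere algebra_simps)
qed

lemma L_E:
  assumes x: "norm x = 1"
  shows "(\<Sum>i\<in>UNIV. x $ i * Tp i h x) = 0"
proof -
  have x0: "x \<noteq> 0" using x by auto
  show ?thesis using euler[OF smooth_C1[OF sF] hF x0] by (simp add: Tp_def FF_def)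
qed

lemma L_TP:
  assumes x: "norm x = 1"
  shows "(\<Sum>i\<in>UNIV. Tp i (\<lambda>y. y $ i * h y) x) = sph_dim TYPE('n) * h x"
proof -
  have x0: "x \<in> -{0}" using x by auto
  have "Tp i (\<lambda>y. y $ i * h y) x = h x + x $ i * Tp i h x - x $ i * x $ i * h x" for i
  proof -
    have "Tp i (\<lambda>y. y $ i * h y) x = partial_deriv i (\<lambda>y. y $ i * FF y) x - 1 * x $ i * (x $ i * FF x)"
      unfolding Tp_def by (rule T_homog[OF sGa hGa gGa x])
    also have "partial_deriv i (\<lambda>y. y $ i * FF y) x = 1 * FF x + x $ i * partial_deriv i FF x"
      using pd_mult[OF pdiff_coord sm_pdiff[OF sF] x0, of i i] by (simp add: pd_coord)
    finally show ?thesis using x by (simp add: Tp_def FF_def hom_ext_on_sphere)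
  qed
  then have "(\<Sum>i\<in>UNIV. Tp i (\<lambda>y. y $ i * h y) x)
      = real CARD('n) * h x + (\<Sum>i\<in>UNIV. x $ i * Tp i h x) - (\<Sum>i\<in>UNIV. x $ i * x $ i) * h x"
    by (simp add: sum.distrib sum_subtractf sum_distrib_right)
  also have "\<dots> = real CARD('n) * h x - h x"
    using L_E[OF x] sum_sq_norm[of x] x by simp
  finally show ?thesis by (simp add: sph_dim_eq algebra_simps)
qed

lemma L_C:
  assumes x: "norm x = 1"
  shows "sphere_laplacian (Tp i h) x
    = Tp i (sphere_laplacian h) x + (sph_dim TYPE('n) - 2) * Tp i h x - 2 * x $ i * sphere_laplacian h x"
proof -
  have x0: "x \<in> -{0}" using x by auto
  have A: "sphere_laplacian (Tp i h) x = euclid_laplacian (partial_deriv i FF) x - (-1) * (-1 + real CARD('n) - 2) * partial_deriv i FF x"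
    by (rule lap_homog[OF sm_d[OF sF] hGb _ x]) (simp add: Tp_def FF_def)
  have B: "Tp i (sphere_laplacian h) x = partial_deriv i (euclid_laplacian FF) x - (-2) * x $ i * euclid_laplacian FF x"
    unfolding Tp_def by (rule T_homog[OF sGc hGc _ x]) (simp add: sphere_laplacian_def FF_def)
  show ?thesis unfolding A B lap_partial_comm[OF x0]
    by (simp add: sph_dim_eq Tp_def FF_def sphere_laplacian_def algebra_simps)
qed

end


lemma hom_ext_lin: "hom_ext (\<lambda>y. a * h y + b * g y) = (\<lambda>y. a * hom_ext h y + b * hom_ext g y)"
  by (simp add: hom_ext_def fun_eq_iff)

lemma hom_ext_sum: "hom_ext (\<lambda>y. \<Sum>i\<in>I. h i y) = (\<lambda>y. \<Sum>i\<in>I. hom_ext (h i) y)"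
  by (simp add: hom_ext_def fun_eq_iff)

lemma SS_lin:
  assumes "smooth_on_sphere h" "smooth_on_sphere g"
  shows "smooth_on_sphere (\<lambda>y. a * h y + b * g y)"
  using assms unfolding smooth_on_sphere_def hom_ext_lin
  by (intro smooth_on_add smooth_on_cmult open_O)

lemma SS_sum:
  assumes "finite I" "\<And>i. i \<in> I \<Longrightarrow> smooth_on_sphere (h i)"
  shows "smooth_on_sphere (\<lambda>y. \<Sum>i\<in>I. h i y)"
  using assms unfolding smooth_on_sphere_def hom_ext_sum
  by (intro smooth_on_sum open_O)

lemma Lap_lin:
  assumes "smooth_on_sphere h" "smooth_on_sphere g" "x \<noteq> 0"
  shows "sphere_laplacian (\<lambda>y. a * h y + b * g y) x = a * sphere_laplacian h x + b * sphere_laplacian g x"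
proof -
  have x: "x \<in> -{0}" using assms by auto
  have sh: "smooth_on (-{0}) (hom_ext h)" and sg: "smooth_on (-{0}) (hom_ext g)"
    using assms by (auto simp: smooth_on_sphere_def)
  show ?thesis unfolding sphere_laplacian_def hom_ext_lin
    using lap_add[OF open_O x smooth_on_cmult[OF open_O sh] smooth_on_cmult[OF open_O sg]]
      lap_cmult[OF open_O x sh] lap_cmult[OF open_O x sg] by simp
qed

lemma Lap_sum:
  assumes "finite I" "\<And>i. i \<in> I \<Longrightarrow> smooth_on_sphere (h i)" "x \<noteq> 0"
  shows "sphere_laplacian (\<lambda>y. \<Sum>i\<in>I. h i y) x = (\<Sum>i\<in>I. sphere_laplacian (h i) x)"
  unfolding sphere_laplacian_def hom_ext_sum
  by (rule lap_sum[OF open_O]) (use assms in \<open>auto simp: smooth_on_sphere_def\<close>)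

lemma Tp_lin:
  assumes "smooth_on_sphere h" "smooth_on_sphere g" "x \<noteq> 0"
  shows "Tp i (\<lambda>y. a * h y + b * g y) x = a * Tp i h x + b * Tp i g x"
proof -
  have x: "x \<in> -{0}" using assms by auto
  have sh: "pdiff (-{0}) (hom_ext h)" and sg: "pdiff (-{0}) (hom_ext g)"
    using assms by (auto simp: smooth_on_sphere_def sm_pdiff)
  show ?thesis unfolding Tp_def hom_ext_lin
    using pd_add[OF pdiff_mult[OF pdiff_const sh] pdiff_mult[OF pdiff_const sg] x]
      pd_cmult[OF sh x] pd_cmult[OF sg x] by simp
qed

lemma Tp_sum:
  assumes "finite I" "\<And>i. i \<in> I \<Longrightarrow> smooth_on_sphere (h i)" "x \<noteq> 0"
  shows "Tp j (\<lambda>y. \<Sum>i\<in>I. h i y) x = (\<Sum>i\<in>I. Tp j (h i) x)"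
  unfolding Tp_def hom_ext_sum
  by (rule pd_sum[where S="-{0}"]) (use assms in \<open>auto simp: smooth_on_sphere_def sm_pdiff\<close>)

lemma hom_ext_cong_sphere:
  assumes "\<And>y. norm y = 1 \<Longrightarrow> h y = g y" "y \<in> -{0}"
  shows "hom_ext h y = hom_ext g y"
  using assms unfolding hom_ext_def by simp

lemma Lap_cong_sphere:
  assumes "\<And>y. norm y = 1 \<Longrightarrow> h y = g y" "x \<noteq> 0"
  shows "sphere_laplacian h x = sphere_laplacian g x"
  unfolding sphere_laplacian_def
  by (rule lap_cong[OF open_O]) (use assms hom_ext_cong_sphere[OF assms(1)] in auto)

lemma Tp_cong_sphere:
  assumes "\<And>y. norm y = 1 \<Longrightarrow> h y = g y" "x \<noteq> 0"
  shows "Tp i h x = Tp i g x"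
  unfolding Tp_def
  by (rule partial_deriv_cong[OF open_O]) (use assms hom_ext_cong_sphere[OF assms(1)] in auto)

definition cc :: "'n::finite itself \<Rightarrow> nat \<Rightarrow> real" where
  "cc T m = (sph_dim T - 2 * real m) * (sph_dim T + 2 * real m - 2) / 4"

lemma gjms_Suc': "gjms (Suc m) h = (\<lambda>x. (-1) * sphere_laplacian (gjms m h) x + cc TYPE('n) (Suc m) * gjms m h x)"
  for h :: "real^'n::finite \<Rightarrow> real"
  by (simp add: cc_def fun_eq_iff)

lemma SS_gjms: "smooth_on_sphere h \<Longrightarrow> smooth_on_sphere (gjms m h)"
proof (induction m)
  case 0 then show ?case by simp
next
  case (Suc m) then show ?case unfolding gjms_Suc' by (intro SS_lin SS_Lap) auto
qed

lemma Lap_gjms: "sphere_laplacian (gjms m h) x = cc TYPE('n) (Suc m) * gjms m h x - gjms (Suc m) h x"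
  for h :: "real^'n::finite \<Rightarrow> real"
  unfolding gjms_Suc' by simp


lemma arith_Q:
  fixes nn M L0 L1 L2 :: real
  defines "c \<equiv> (nn - 2 * (M + 1)) * (nn + 2 * (M + 1) - 2) / 4"
    and "e \<equiv> M * (nn + 2 * M - 2)"
    and "cm \<equiv> (nn - 2 * M) * (nn + 2 * M - 2) / 4"
  shows "- ((c * L1 - L2) + e * (cm * L0 - L1)) + 2 * ((nn + 2 * M) * (L1 + e / 2 * L0)) + (c - nn) * (L1 + e * L0)
     = L2 + (M + 1) * (nn + 2 * (M + 1) - 2) * L1"
  unfolding c_def e_def cm_def by (simp add: field_simps; (algebra)?)

lemma arith_R:
  fixes nn M L0 L1 L2 :: real
  defines "c \<equiv> (nn - 2 * (M + 1)) * (nn + 2 * (M + 1) - 2) / 4"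
    and "e \<equiv> M * (nn + 2 * M - 2)"
    and "cm \<equiv> (nn - 2 * M) * (nn + 2 * M - 2) / 4"
  shows "- ((nn + 2 * M) * ((c * L1 - L2) + e / 2 * (cm * L0 - L1)))
      + (nn - 2 + c) * ((nn + 2 * M) * (L1 + e / 2 * L0))
      - 2 * (((c * L1 - L2) + e * (cm * L0 - L1)) - 2 * ((nn + 2 * M) * (L1 + e / 2 * L0)) + nn * (L1 + e * L0))
     = (nn + 2 * (M + 1)) * (L2 + (M + 1) * (nn + 2 * (M + 1) - 2) / 2 * L1)"
  unfolding c_def e_def cm_def by (simp add: field_simps; (algebra)?)

definition ee :: "'n::finite itself \<Rightarrow> nat \<Rightarrow> real" where
  "ee T m = real m * (sph_dim T + 2 * real m - 2)"

context
  fixes u :: "real^'n::finite \<Rightarrow> real"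
  assumes SSu: "smooth_on_sphere u"
begin

definition "A m i = gjms m (\<lambda>z. z $ i * u z)"
definition "QQ m = (\<lambda>y. \<Sum>i\<in>UNIV. y $ i * A m i y)"
definition "RR m = (\<lambda>y. \<Sum>i\<in>UNIV. Tp i (A m i) y)"

lemma SSA: "smooth_on_sphere (A m i)"
  unfolding A_def by (rule SS_gjms[OF SS_mult_coord[OF SSu]])
lemma SSxA: "smooth_on_sphere (\<lambda>y. y $ i * A m i y)"
  by (rule SS_mult_coord[OF SSA])
lemma SSQ: "smooth_on_sphere (QQ m)"
  unfolding QQ_def by (rule SS_sum) (auto intro: SSxA)
lemma SSR: "smooth_on_sphere (RR m)"
  unfolding RR_def by (rule SS_sum) (auto intro: SS_Tp SSA)
lemma SSL: "smooth_on_sphere (gjms m u)"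
  by (rule SS_gjms[OF SSu])

lemma key:
  "\<forall>x. norm x = 1 \<longrightarrow> QQ m x = gjms m u x + ee TYPE('n) m * gjms (m - 1) u x
      \<and> RR m x = (sph_dim TYPE('n) + 2 * real m) * (gjms m u x + ee TYPE('n) m / 2 * gjms (m - 1) u x)"
proof (induction m)
  case 0
  show ?case
  proof (intro allI impI conjI)
    fix x :: "real^'n" assume x: "norm x = 1"
    have "QQ 0 x = (\<Sum>i\<in>UNIV. x $ i * x $ i) * u x"
      by (simp add: QQ_def A_def sum_distrib_right mult.assoc)
    then show "QQ 0 x = gjms 0 u x + ee TYPE('n) 0 * gjms (0 - 1) u x"
      using sum_sq_norm[of x] x by (simp add: ee_def)
    have "RR 0 x = sph_dim TYPE('n) * u x"
      unfolding RR_def A_def using L_TP[OF SSu x] by simp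
    then show "RR 0 x = (sph_dim TYPE('n) + 2 * real 0) * (gjms 0 u x + ee TYPE('n) 0 / 2 * gjms (0 - 1) u x)"
      by (simp add: ee_def)
  qed
next
  case (Suc m)
  show ?case
  proof (intro allI impI)
    fix x :: "real^'n" assume x: "norm x = 1"
    have x0: "x \<noteq> 0" using x by auto
    define nn where "nn = sph_dim TYPE('n)"
    define M where "M = real m"
    define c where "c = cc TYPE('n) (Suc m)"
    define cm where "cm = cc TYPE('n) m"
    define e where "e = ee TYPE('n) m"
    define L0 where "L0 = gjms (m - 1) u x"
    define L1 where "L1 = gjms m u x"
    define L2 where "L2 = gjms (Suc m) u x"
    define q where "q = QQ m x"
    define r where "r = RR m x"
    define LQ where "LQ = sphere_laplacian (QQ m) x"
    define LR where "LR = sphere_laplacian (RR m) x"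
    have c_eq: "c = (nn - 2 * (M + 1)) * (nn + 2 * (M + 1) - 2) / 4"
      by (simp add: c_def cc_def nn_def M_def)
    have cm_eq: "cm = (nn - 2 * M) * (nn + 2 * M - 2) / 4"
      by (simp add: cm_def cc_def nn_def M_def)
    have e_eq: "e = M * (nn + 2 * M - 2)"
      by (simp add: e_def ee_def nn_def M_def)
    have IH: "q = L1 + e * L0" "r = (nn + 2 * M) * (L1 + e / 2 * L0)"
      using Suc.IH x by (auto simp: q_def r_def L0_def L1_def e_def nn_def M_def)
    have IHQ: "\<And>y. norm y = 1 \<Longrightarrow> QQ m y = 1 * gjms m u y + e * gjms (m - 1) u y"
      using Suc.IH by (simp add: e_def)
    have IHR: "\<And>y. norm y = 1 \<Longrightarrow> RR m y = (nn + 2 * M) * gjms m u y + ((nn + 2 * M) * e / 2) * gjms (m - 1) u y"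
      using Suc.IH by (simp add: e_def nn_def M_def algebra_simps)
    have LapL1: "sphere_laplacian (gjms m u) x = c * L1 - L2"
      unfolding c_def L1_def L2_def by (rule Lap_gjms)
    have LapL0: "e * sphere_laplacian (gjms (m - 1) u) x = e * (cm * L0 - L1)"
    proof (cases m)
      case 0 then show ?thesis by (simp add: e_def ee_def)
    next
      case (Suc p)
      then show ?thesis using Lap_gjms[of p u x] by (simp add: cm_def L0_def L1_def)
    qed
    have LQ_val: "LQ = (c * L1 - L2) + e * (cm * L0 - L1)"
    proof -
      have "LQ = sphere_laplacian (\<lambda>y. 1 * gjms m u y + e * gjms (m - 1) u y) x"
        unfolding LQ_def by (rule Lap_cong_sphere[OF IHQ x0])
      also have "\<dots> = 1 * sphere_laplacian (gjms m u) x + e * sphere_laplacian (gjms (m - 1) u) x"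
        by (rule Lap_lin[OF SSL SSL x0])
      finally show ?thesis using LapL1 LapL0 by simp
    qed
    have LR_val: "LR = (nn + 2 * M) * ((c * L1 - L2) + e / 2 * (cm * L0 - L1))"
    proof -
      have "LR = sphere_laplacian (\<lambda>y. (nn + 2 * M) * gjms m u y + ((nn + 2 * M) * e / 2) * gjms (m - 1) u y) x"
        unfolding LR_def by (rule Lap_cong_sphere[OF IHR x0])
      also have "\<dots> = (nn + 2 * M) * sphere_laplacian (gjms m u) x + ((nn + 2 * M) * e / 2) * sphere_laplacian (gjms (m - 1) u) x"
        by (rule Lap_lin[OF SSL SSL x0])
      also have "((nn + 2 * M) * e / 2) * sphere_laplacian (gjms (m - 1) u) x = (nn + 2 * M) / 2 * (e * sphere_laplacian (gjms (m - 1) u) x)"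
        by simp
      finally show ?thesis unfolding LapL1 LapL0 by (simp add: algebra_simps)
    qed
    have AS: "A (Suc m) i = (\<lambda>y. (-1) * sphere_laplacian (A m i) y + c * A m i y)" for i
      unfolding A_def c_def by (rule gjms_Suc')
    have P_i: "x $ i * sphere_laplacian (A m i) x
        = sphere_laplacian (\<lambda>y. y $ i * A m i y) x - 2 * Tp i (A m i) x + nn * (x $ i * A m i x)" for i
      using L_P[OF SSA x, where i=i] by (simp add: nn_def algebra_simps)
    have LQ_sum: "LQ = (\<Sum>i\<in>UNIV. sphere_laplacian (\<lambda>y. y $ i * A m i y) x)"
      unfolding LQ_def QQ_def by (rule Lap_sum) (use x0 in \<open>auto intro: SSxA\<close>)
    have LR_sum: "LR = (\<Sum>i\<in>UNIV. sphere_laplacian (Tp i (A m i)) x)"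
      unfolding LR_def RR_def by (rule Lap_sum) (use x0 in \<open>auto intro: SS_Tp SSA\<close>)
    have xLap: "(\<Sum>i\<in>UNIV. x $ i * sphere_laplacian (A m i) x) = LQ - 2 * r + nn * q"
      unfolding P_i LQ_sum r_def q_def RR_def QQ_def
      by (simp add: sum.distrib sum_subtractf sum_distrib_left)
    have Qs: "QQ (Suc m) x = - LQ + 2 * r + (c - nn) * q"
    proof -
      have "QQ (Suc m) x = (\<Sum>i\<in>UNIV. (-1) * (x $ i * sphere_laplacian (A m i) x) + c * (x $ i * A m i x))"
        unfolding QQ_def AS by (simp add: algebra_simps)
      also have "\<dots> = - (\<Sum>i\<in>UNIV. x $ i * sphere_laplacian (A m i) x) + c * q"
        by (simp add: q_def QQ_def sum.distrib sum_distrib_left sum_negf sum_subtractf)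
      finally show ?thesis unfolding xLap by (simp add: algebra_simps)
    qed
    have C_i: "Tp i (sphere_laplacian (A m i)) x
        = sphere_laplacian (Tp i (A m i)) x - (nn - 2) * Tp i (A m i) x + 2 * x $ i * sphere_laplacian (A m i) x" for i
      using L_C[OF SSA x, where i=i] by (simp add: nn_def algebra_simps)
    have Rs: "RR (Suc m) x = - LR + (nn - 2 + c) * r - 2 * (LQ - 2 * r + nn * q)"
    proof -
      have "RR (Suc m) x = (\<Sum>i\<in>UNIV. (-1) * Tp i (sphere_laplacian (A m i)) x + c * Tp i (A m i) x)"
        unfolding RR_def AS by (rule sum.cong[OF refl]) (rule Tp_lin[OF SS_Lap[OF SSA] SSA x0])
      also have "\<dots> = (\<Sum>i\<in>UNIV. - sphere_laplacian (Tp i (A m i)) x + (nn - 2 + c) * Tp i (A m i) x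
           - 2 * (x $ i * sphere_laplacian (A m i) x))"
        unfolding C_i by (simp add: algebra_simps)
      also have "\<dots> = - LR + (nn - 2 + c) * r - 2 * (\<Sum>i\<in>UNIV. x $ i * sphere_laplacian (A m i) x)"
        unfolding LR_sum r_def RR_def by (simp add: sum.distrib sum_subtractf sum_distrib_left sum_negf)
      finally show ?thesis unfolding xLap .
    qed
    have "QQ (Suc m) x = L2 + (M + 1) * (nn + 2 * (M + 1) - 2) * L1"
      unfolding Qs LQ_val IH c_eq cm_eq e_eq by (rule arith_Q)
    moreover have "RR (Suc m) x = (nn + 2 * (M + 1)) * (L2 + (M + 1) * (nn + 2 * (M + 1) - 2) / 2 * L1)"
      unfolding Rs LR_val LQ_val IH c_eq cm_eq e_eq by (rule arith_R)
    ultimately show "QQ (Suc m) x = gjms (Suc m) u x + ee TYPE('n) (Suc m) * gjms (Suc m - 1) u x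
      \<and> RR (Suc m) x = (sph_dim TYPE('n) + 2 * real (Suc m)) * (gjms (Suc m) u x + ee TYPE('n) (Suc m) / 2 * gjms (Suc m - 1) u x)"
      by (simp add: L1_def L2_def ee_def nn_def M_def algebra_simps)
  qed
qed

end


theorem theorem1p3:
  fixes u :: "real^'n::finite \<Rightarrow> real" and k :: nat and x :: "real^'n"
  assumes "CARD('n) \<ge> 3" and "k \<ge> 1"
    and "smooth_on_sphere u"
    and "x \<in> sphere 0 1"
  shows "(\<Sum>i\<in>UNIV. x $ i * (gjms k (\<lambda>y. y $ i * u y) x - x $ i * gjms k u x))
         = real k * (sph_dim TYPE('n) + 2 * real k - 2) * gjms (k - 1) u x"
proof -
  have x1: "norm x = 1" using assms(4) by simp
  have Q: "QQ u k x = gjms k u x + ee TYPE('n) k * gjms (k - 1) u x"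
    using key[OF assms(3), of k] x1 by blast
  have "(\<Sum>i\<in>UNIV. x $ i * (gjms k (\<lambda>y. y $ i * u y) x - x $ i * gjms k u x))
      = QQ u k x - (\<Sum>i\<in>UNIV. x $ i * x $ i) * gjms k u x"
    by (simp add: QQ_def[OF assms(3)] A_def[OF assms(3)] right_diff_distrib sum_subtractf sum_distrib_right mult.assoc)
  also have "\<dots> = ee TYPE('n) k * gjms (k - 1) u x"
    using Q sum_sq_norm[of x] x1 by simp
  finally show ?thesis by (simp add: ee_def)
qed

end
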